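(* For each $\pi\in\Pi$, the map $x\mapsto\mathscr{P}(\pi,x)$ on $\mathbb{S}^D$ is twice differentiable, and $\displaystyle\sup_{\pi\in\Pi,\ x\in\mathbb{S}^D,\ y\in\mathbb{S}^D,\ |y|\le1}\ \sum_{j=1}^2\Big|\frac{d^j}{dr^j}\mathscr{P}(\pi,x+ry)\Big|_{r=0}\Big|\le 3.$
   Context: Fix $D\in\mathbb{N}$. For real matrices (or vectors) of equal size, $a\cdot b=\sum_{i,j}a_{ij}b_{ij}$ and $|a|=\sqrt{a\cdot a}$. $\mathbb{S}^D$ is the space of real symmetric $D\times D$ matrices, $\mathbb{S}^D_+$ the positive semidefinite ones; $a\succeq b$ means $a\cdot c\ge b\cdot c$ for all $c\in\mathbb{S}^D_+$. $P_1$ is a probability measure supported in the closed unit ball of $\mathbb{R}^D$. $\xi:\mathbb{R}^{D\times D}\to\mathbb{R}$ satisfies: (i) $\xi$ is differentiable with locally Lipschitz gradient $\nabla\xi$; (ii) $\xi\ge0$ on $\mathbb{S}^D_+$, $\xi(0)=0$, $\xi(a)=\xi(a^\intercal)$; (iii) for $a,b\in\mathbb{S}^D_+$ with $a\succeq b$, $\xi(a)\ge\xi(b)$ and $\nabla\xi(a)\succeq\nabla\xi(b)$. $\Pi$ is the set of left-continuous maps $\pi:[0,1]\to\mathbb{S}^D_+$ with $\pi(s')\succeq\pi(s)$ for $s'\ge s$. Let $\mathfrak{R}$ be the Ruelle probability cascade with overlap uniform on $[0,1]$ (random probability measure on the unit sphere of a separable Hilbert space with inner product $\alpha\wedge\alpha'$,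 a.s. ultrametric support, $\alpha\wedge\alpha'$ uniform on $[0,1]$ under $\mathbb{E}\mathfrak{R}^{\otimes 2}$). For $\pi\in\Pi$, conditionally on $\mathfrak{R}$, $(w^\pi(\alpha))_{\alpha\in\mathrm{supp}\,\mathfrak{R}}$ is a centered $\mathbb{R}^D$-valued Gaussian process with $\mathbb{E}w^\pi(\alpha)w^\pi(\alpha')^\intercal=\pi(\alpha\wedge\alpha')$. With $\theta(a)=a\cdot\nabla\xi(a)-\xi(a)$, $\mathscr{P}(\pi,x)=\mathbb{E}\log\iint\exp\big(w^{\nabla\xi\circ\pi}(\alpha)\cdot\tau-\tfrac12\nabla\xi(\pi(1))\cdot\tau\tau^\intercal+x\cdot\tau\tau^\intercal\big)dP_1(\tau)d\mathfrak{R}(\alpha)+\tfrac12\int_0^1\theta(\pi(s))ds$ for $x\in\mathbb{S}^D$. *)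

theory Defs
  imports "HOL-Probability.Probability"
begin

type_synonym 'd mat = "real ^ 'd ^ 'd"

definition symm :: "'d::finite mat \<Rightarrow> bool" where
  "symm a \<longleftrightarrow> transpose a = a"

definition psd :: "'d::finite mat \<Rightarrow> bool" where
  "psd a \<longleftrightarrow> symm a \<and> (\<forall>v::real^'d. v \<bullet> (a *v v) \<ge> 0)"

definition loew_ge :: "'d::finite mat \<Rightarrow> 'd mat \<Rightarrow> bool" where
  "loew_ge a b \<longleftrightarrow> (\<forall>c. psd c \<longrightarrow> a \<bullet> c \<ge> b \<bullet> c)"

definition outer :: "real ^ 'd \<Rightarrow> real ^ 'd \<Rightarrow> 'd::finite mat" where
  "outer u v = (\<chi> i j. u $ i * v $ j)"

definition xi_assm :: "('d::finite mat \<Rightarrow> real) \<Rightarrow> ('d mat \<Rightarrow> 'd mat) \<Rightarrow> bool" where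
  "xi_assm \<xi> g \<longleftrightarrow>
     (\<forall>a. (\<xi> has_derivative (\<lambda>h. g a \<bullet> h)) (at a)) \<and>
     (\<forall>a. \<exists>e>0. \<exists>L. L-lipschitz_on (ball a e) g) \<and>
     (\<forall>a. psd a \<longrightarrow> \<xi> a \<ge> 0) \<and> \<xi> 0 = 0 \<and> (\<forall>a. \<xi> a = \<xi> (transpose a)) \<and>
     (\<forall>a b. psd a \<longrightarrow> psd b \<longrightarrow> loew_ge a b \<longrightarrow> \<xi> a \<ge> \<xi> b \<and> loew_ge (g a) (g b))"

definition theta :: "('d::finite mat \<Rightarrow> real) \<Rightarrow> ('d mat \<Rightarrow> 'd mat) \<Rightarrow> 'd mat \<Rightarrow> real" where
  "theta \<xi> g a = a \<bullet> g a - \<xi> a"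

definition Pi_paths :: "(real \<Rightarrow> 'd::finite mat) set" where
  "Pi_paths = {\<pi>. (\<forall>s\<in>{0..1}. psd (\<pi> s)) \<and>
                  (\<forall>s\<in>{0<..1}. (\<pi> \<longlongrightarrow> \<pi> s) (at_left s)) \<and>
                  (\<forall>s\<in>{0..1}. \<forall>s'\<in>{0..1}. s \<le> s' \<longrightarrow> loew_ge (\<pi> s') (\<pi> s))}"

definition msupp :: "'a::topological_space measure \<Rightarrow> 'a set" where
  "msupp \<mu> = {x. \<forall>U. open U \<longrightarrow> x \<in> U \<longrightarrow> emeasure \<mu> U > 0}"

text \<open>Ruelle probability cascade with overlap uniform on [0,1], described by its
  defining properties: a random probability measure (a measurable kernel from M)
  on the unit sphere of the separable Hilbert space 'h, a.s. ultrametric support,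
  and overlap uniform on [0,1] under E R^{\<otimes>2}.\<close>
definition is_RPC :: "'w measure \<Rightarrow> ('w \<Rightarrow> 'h::{real_inner,polish_space} measure) \<Rightarrow> bool" where
  "is_RPC M R \<longleftrightarrow> prob_space M \<and> R \<in> M \<rightarrow>\<^sub>M prob_algebra borel \<and>
     (\<forall>\<omega>\<in>space M. emeasure (R \<omega>) (sphere 0 1) = 1) \<and>
     (AE \<omega> in M. \<forall>a\<in>msupp (R \<omega>). \<forall>b\<in>msupp (R \<omega>). \<forall>c\<in>msupp (R \<omega>).
         a \<bullet> c \<ge> min (a \<bullet> b) (b \<bullet> c)) \<and>
     (\<forall>A\<in>sets (borel :: real measure).
        (\<integral>\<^sup>+\<omega>. emeasure (R \<omega> \<Otimes>\<^sub>M R \<omega>) {p\<in>space (R \<omega> \<Otimes>\<^sub>M R \<omega>). fst p \<bullet> snd p \<in> A} \<partial>M)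
          = emeasure lborel (A \<inter> {0..1}))"

definition centered_gaussian :: "'e measure \<Rightarrow> ('e \<Rightarrow> real) \<Rightarrow> real \<Rightarrow> bool" where
  "centered_gaussian N X v \<longleftrightarrow>
     (if v = 0 then X \<in> borel_measurable N \<and> (AE \<eta> in N. X \<eta> = 0)
      else v > 0 \<and> distributed N lborel X (normal_density 0 (sqrt v)))"

text \<open>Conditionally on R (realised as a second independent probability space N), w is a
  measurable centered R^D-valued Gaussian process on supp R with
  E w(a) w(a')^T = C (a . a').  Joint Gaussianity: every finite linear combination
  is centered Gaussian with the prescribed variance.\<close>
definition cond_gauss_proc ::
  "'w measure \<Rightarrow> 'e measure \<Rightarrow> ('w \<Rightarrow> 'h::{real_inner,polish_space} measure)
     \<Rightarrow> (real \<Rightarrow> 'd::finite mat) \<Rightarrow> ('w \<Rightarrow> 'e \<Rightarrow> 'h \<Rightarrow> real ^ 'd) \<Rightarrow> bool" where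
  "cond_gauss_proc M N R C w \<longleftrightarrow>
     (\<lambda>((\<omega>, \<eta>), a). w \<omega> \<eta> a) \<in> borel_measurable ((M \<Otimes>\<^sub>M N) \<Otimes>\<^sub>M borel) \<and>
     (AE \<omega> in M. \<forall>(n::nat) (as :: nat \<Rightarrow> 'h) (cs :: nat \<Rightarrow> real ^ 'd).
        (\<forall>i<n. as i \<in> msupp (R \<omega>)) \<longrightarrow>
        centered_gaussian N (\<lambda>\<eta>. \<Sum>i<n. cs i \<bullet> w \<omega> \<eta> (as i))
          (\<Sum>i<n. \<Sum>j<n. cs i \<bullet> (C (as i \<bullet> as j) *v cs j)))"

text \<open>The functional script-P(pi, x); here w is the process w^{\<nabla>\<xi>\<circ>\<pi>}.\<close>
definition Pfun ::
  "'w measure \<Rightarrow> 'e measure \<Rightarrow> ('w \<Rightarrow> 'h::{real_inner,polish_space} measure)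
     \<Rightarrow> ('w \<Rightarrow> 'e \<Rightarrow> 'h \<Rightarrow> real ^ 'd) \<Rightarrow> (real ^ 'd) measure
     \<Rightarrow> ('d::finite mat \<Rightarrow> real) \<Rightarrow> ('d mat \<Rightarrow> 'd mat) \<Rightarrow> (real \<Rightarrow> 'd mat) \<Rightarrow> 'd mat \<Rightarrow> real" where
  "Pfun M N R w P1 \<xi> g \<pi> x =
     (\<integral>\<omega>\<eta>. ln (\<integral>\<tau>a. exp (w (fst \<omega>\<eta>) (snd \<omega>\<eta>) (snd \<tau>a) \<bullet> fst \<tau>a
                     - 1/2 * (g (\<pi> 1) \<bullet> outer (fst \<tau>a) (fst \<tau>a))
                     + x \<bullet> outer (fst \<tau>a) (fst \<tau>a)) \<partial>(P1 \<Otimes>\<^sub>M R (fst \<omega>\<eta>))) \<partial>(M \<Otimes>\<^sub>M N))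
     + 1/2 * (\<integral>s. indicator {0..1} s * theta \<xi> g (\<pi> s) \<partial>lborel)"

definition twice_differentiable_on :: "('a::real_normed_vector \<Rightarrow> real) \<Rightarrow> 'a set \<Rightarrow> bool" where
  "twice_differentiable_on f S \<longleftrightarrow>
     (\<exists>f' :: 'a \<Rightarrow> ('a \<Rightarrow>\<^sub>L real).
        (\<forall>x\<in>S. (f has_derivative blinfun_apply (f' x)) (at x within S)) \<and>
        (\<forall>x\<in>S. f' differentiable (at x within S)))"

end

theory Submission
  imports Defs
begin
lemma exp_quad:
  fixes s :: real assumes "\<bar>s\<bar> \<le> 1" shows "\<bar>exp s - 1 - s\<bar> \<le> s\<^sup>2"
proof (cases "s \<ge> 0")
  case True
  have "exp s \<le> 1 + s + s\<^sup>2" "1 + s \<le> exp s" using exp_bound[of s] True assms exp_ge_add_one_self[of s] by auto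
  moreover have "0 \<le> s\<^sup>2" by simp
  ultimately show ?thesis unfolding abs_le_iff by linarith
next
  case False
  define u where "u = - s"
  have u: "0 < u" "u \<le> 1" using False assms by (auto simp: u_def)
  have "exp u \<ge> 1 + u" by (rule exp_ge_add_one_self)
  hence "exp s \<le> 1 / (1 + u)" using u by (simp add: u_def exp_minus field_simps)
  also have "\<dots> \<le> 1 - u + u\<^sup>2"
    using u by (simp add: field_simps power2_eq_square)
  finally have "exp s \<le> 1 + s + s\<^sup>2" by (simp add: u_def)
  moreover have "1 + s \<le> exp s" by (rule exp_ge_add_one_self)
  moreover have "0 \<le> s\<^sup>2" by simp
  ultimately show ?thesis unfolding abs_le_iff by linarith
qed

lemma norm_outer: "norm (outer u v :: 'd::finite mat) = norm u * norm v"
proof -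
  have "outer u v = (\<chi> i. u $ i *\<^sub>R v)" by (simp add: outer_def vec_eq_iff)
  hence "norm (outer u v) = L2_set (\<lambda>i. norm (u $ i *\<^sub>R v)) UNIV"
    by (simp only: norm_vec_def vec_lambda_beta)
  also have "\<dots> = L2_set (\<lambda>i. \<bar>u $ i\<bar> * norm v) UNIV" by simp
  also have "\<dots> = L2_set (\<lambda>i. \<bar>u $ i\<bar>) UNIV * norm v"
    by (simp add: L2_set_left_distrib)
  also have "\<dots> = norm u * norm v" by (simp add: norm_vec_def)
  finally show ?thesis .
qed

lemma cont_outer: "continuous_on UNIV (\<lambda>t::real^'d::finite. outer t t)"
  unfolding outer_def
  by (intro continuous_on_vec_lambda continuous_intros)

lemma int_wt:
  fixes \<psi> f :: "'a \<Rightarrow> real"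
  assumes "integrable \<mu> \<psi>" "f \<in> borel_measurable \<mu>" "AE u in \<mu>. \<bar>f u\<bar> \<le> B"
  shows "integrable \<mu> (\<lambda>u. \<psi> u * f u)"
proof (rule Bochner_Integration.integrable_bound[where f="\<lambda>u. \<bar>B\<bar> * \<psi> u"])
  show "integrable \<mu> (\<lambda>u. \<bar>B\<bar> * \<psi> u)" using assms(1) by simp
  show "(\<lambda>u. \<psi> u * f u) \<in> borel_measurable \<mu>"
    using assms(1,2) by (intro borel_measurable_times) auto
  show "AE x in \<mu>. norm (\<psi> x * f x) \<le> norm (\<bar>B\<bar> * \<psi> x)"
    using assms(3) proof eventually_elim
    case (elim x)
    hence "\<bar>\<psi> x\<bar> * \<bar>f x\<bar> \<le> \<bar>\<psi> x\<bar> * \<bar>B\<bar>" by (intro mult_left_mono) auto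
    thus ?case by (simp add: abs_mult mult.commute)
  qed
qed

lemma wt_bound:
  fixes \<psi> f :: "'a \<Rightarrow> real"
  assumes "integrable \<mu> \<psi>" "\<And>u. 0 \<le> \<psi> u" "f \<in> borel_measurable \<mu>" "AE u in \<mu>. \<bar>f u\<bar> \<le> B"
  shows "\<bar>\<integral>u. \<psi> u * f u \<partial>\<mu>\<bar> \<le> B * (\<integral>u. \<psi> u \<partial>\<mu>)"
proof -
  have i: "integrable \<mu> (\<lambda>u. \<psi> u * f u)" by (rule int_wt[OF assms(1,3,4)])
  have "\<bar>\<integral>u. \<psi> u * f u \<partial>\<mu>\<bar> \<le> (\<integral>u. \<bar>\<psi> u * f u\<bar> \<partial>\<mu>)"
    by (rule integral_abs_bound)
  also have "\<dots> \<le> (\<integral>u. B * \<psi> u \<partial>\<mu>)"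
  proof (intro integral_mono_AE)
    have "AE u in \<mu>. \<bar>\<bar>f u\<bar>\<bar> \<le> B" using assms(4) by simp
    hence "integrable \<mu> (\<lambda>u. \<psi> u * \<bar>f u\<bar>)" using int_wt[OF assms(1) borel_measurable_abs[OF assms(3)]] by blast
    thus "integrable \<mu> (\<lambda>u. \<bar>\<psi> u * f u\<bar>)" by (simp add: abs_mult abs_of_nonneg assms(2))
    show "integrable \<mu> (\<lambda>u. B * \<psi> u)" using assms(1) by simp
    show "AE u in \<mu>. \<bar>\<psi> u * f u\<bar> \<le> B * \<psi> u"
      using assms(4) proof eventually_elim
      case (elim u)
      hence "\<psi> u * \<bar>f u\<bar> \<le> \<psi> u * B" by (intro mult_left_mono) (auto simp: assms(2))
      thus ?case by (simp add: abs_mult abs_of_nonneg assms(2) mult.commute)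
    qed
  qed
  also have "\<dots> = B * (\<integral>u. \<psi> u \<partial>\<mu>)" by simp
  finally show ?thesis .
qed

lemma gibbs:
  fixes \<psi> s t :: "'a \<Rightarrow> real"
  assumes ps: "prob_space \<mu>" and int: "integrable \<mu> \<psi>" and pos: "\<And>u. 0 < \<psi> u"
    and sm: "s \<in> borel_measurable \<mu>" and tm: "t \<in> borel_measurable \<mu>"
    and sb: "AE u in \<mu>. \<bar>s u\<bar> \<le> \<delta>" and tb: "AE u in \<mu>. \<bar>t u\<bar> \<le> \<kappa>"
    and d: "0 \<le> \<delta>" "\<delta> \<le> 1/4" and k: "0 \<le> \<kappa>"
  defines "Z \<equiv> \<integral>u. \<psi> u \<partial>\<mu>"
  shows "\<bar>ln (\<integral>u. \<psi> u * exp (s u) \<partial>\<mu>) - ln Z - (\<integral>u. \<psi> u * s u \<partial>\<mu>) / Z\<bar> \<le> 5 * \<delta>\<^sup>2"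
    and "\<bar>(\<integral>u. \<psi> u * exp (s u) * t u \<partial>\<mu>) / (\<integral>u. \<psi> u * exp (s u) \<partial>\<mu>) - (\<integral>u. \<psi> u * t u \<partial>\<mu>) / Z
          - ((\<integral>u. \<psi> u * (s u * t u) \<partial>\<mu>) / Z - (\<integral>u. \<psi> u * s u \<partial>\<mu>) / Z * ((\<integral>u. \<psi> u * t u \<partial>\<mu>) / Z))\<bar>
          \<le> 10 * \<delta>\<^sup>2 * \<kappa>"
proof -
  interpret prob_space \<mu> by (rule ps)
  have pm: "\<psi> \<in> borel_measurable \<mu>" using int by auto
  have Zpos: "Z > 0"
  proof -
    have "Z \<ge> 0" unfolding Z_def using pos by (intro integral_nonneg_AE) (auto simp: less_imp_le)
    moreover have "Z \<noteq> 0"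
    proof
      assume "Z = 0"
      hence "AE u in \<mu>. \<psi> u = 0" unfolding Z_def
        using integral_nonneg_eq_0_iff_AE[OF int] pos by (auto simp: less_imp_le)
      hence "AE u in \<mu>. False" by eventually_elim (use pos in \<open>auto simp: less_le\<close>)
      thus False by simp
    qed
    ultimately show ?thesis by simp
  qed
  have se: "(\<lambda>u. exp (s u)) \<in> borel_measurable \<mu>" using sm by measurable
  have eb: "AE u in \<mu>. \<bar>exp (s u)\<bar> \<le> exp \<delta>" using sb by eventually_elim auto
  have q: "AE u in \<mu>. \<bar>exp (s u) - 1 - s u\<bar> \<le> \<delta>\<^sup>2"
    using sb proof eventually_elim
    case (elim u)
    hence "\<bar>s u\<bar> \<le> 1" using d by simp
    hence "\<bar>exp (s u) - 1 - s u\<bar> \<le> (s u)\<^sup>2" by (rule exp_quad)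
    also have "\<dots> \<le> \<delta>\<^sup>2" using elim by (metis abs_ge_zero power2_abs power_mono)
    finally show ?case .
  qed
  have qt: "AE u in \<mu>. \<bar>t u * (exp (s u) - 1 - s u)\<bar> \<le> \<kappa> * \<delta>\<^sup>2"
    using q tb by eventually_elim (auto simp: abs_mult intro!: mult_mono)
  have st: "AE u in \<mu>. \<bar>s u * t u\<bar> \<le> \<delta> * \<kappa>"
    using sb tb by eventually_elim (auto simp: abs_mult intro!: mult_mono)
  have ie: "integrable \<mu> (\<lambda>u. \<psi> u * exp (s u))" by (rule int_wt[OF int se eb])
  have is': "integrable \<mu> (\<lambda>u. \<psi> u * s u)" by (rule int_wt[OF int sm sb])
  have it: "integrable \<mu> (\<lambda>u. \<psi> u * t u)" by (rule int_wt[OF int tm tb])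
  have ist: "integrable \<mu> (\<lambda>u. \<psi> u * (s u * t u))"
    by (rule int_wt[OF int _ st]) (use sm tm in measurable)
  have ebt: "AE u in \<mu>. \<bar>exp (s u) * t u\<bar> \<le> exp \<delta> * \<kappa>"
    using eb tb by eventually_elim (auto simp: abs_mult intro!: mult_mono)
  have iet: "integrable \<mu> (\<lambda>u. \<psi> u * (exp (s u) * t u))"
    by (rule int_wt[OF int _ ebt]) (use sm tm in measurable)
  define Es where "Es = (\<integral>u. \<psi> u * s u \<partial>\<mu>) / Z"
  define Et where "Et = (\<integral>u. \<psi> u * t u \<partial>\<mu>) / Z"
  define Est where "Est = (\<integral>u. \<psi> u * (s u * t u) \<partial>\<mu>) / Z"
  define r where "r = (\<integral>u. \<psi> u * exp (s u) \<partial>\<mu>) / Z"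
  define a where "a = (\<integral>u. \<psi> u * exp (s u) * t u \<partial>\<mu>) / Z"
  have bEs: "\<bar>Es\<bar> \<le> \<delta>"
    using wt_bound[OF int _ sm sb] pos Zpos by (simp add: Es_def Z_def abs_div less_imp_le divide_le_eq)
  have bEt: "\<bar>Et\<bar> \<le> \<kappa>"
    using wt_bound[OF int _ tm tb] pos Zpos by (simp add: Et_def Z_def abs_div less_imp_le divide_le_eq)
  have bEst: "\<bar>Est\<bar> \<le> \<delta> * \<kappa>"
    using wt_bound[OF int _ _ st] pos Zpos sm tm by (simp add: Est_def Z_def abs_div less_imp_le divide_le_eq)
  define \<epsilon> where "\<epsilon> = r - 1 - Es"
  have "(\<integral>u. \<psi> u * (exp (s u) - 1 - s u) \<partial>\<mu>) = (\<integral>u. \<psi> u * exp (s u) - \<psi> u - \<psi> u * s u \<partial>\<mu>)"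
    by (simp add: algebra_simps)
  also have "\<dots> = (\<integral>u. \<psi> u * exp (s u) \<partial>\<mu>) - Z - (\<integral>u. \<psi> u * s u \<partial>\<mu>)"
    using ie int is' by (simp add: Z_def)
  finally have e1: "(\<integral>u. \<psi> u * (exp (s u) - 1 - s u) \<partial>\<mu>) = r * Z - Z - Es * Z"
    using Zpos by (simp add: r_def Es_def)
  have bEps: "\<bar>\<epsilon>\<bar> \<le> \<delta>\<^sup>2"
  proof -
    have "\<bar>r * Z - Z - Es * Z\<bar> \<le> \<delta>\<^sup>2 * Z"
      using wt_bound[OF int _ _ q] pos sm e1 by (simp add: less_imp_le Z_def)
    moreover have "r * Z - Z - Es * Z = \<epsilon> * Z" by (simp add: \<epsilon>_def algebra_simps)
    ultimately have "\<bar>\<epsilon>\<bar> * Z \<le> \<delta>\<^sup>2 * Z"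
      by (simp add: abs_mult Zpos abs_of_pos)
    thus ?thesis using Zpos by simp
  qed
  define \<eta> where "\<eta> = a - Et - Est"
  have "(\<integral>u. \<psi> u * (t u * (exp (s u) - 1 - s u)) \<partial>\<mu>) = (\<integral>u. \<psi> u * (exp (s u) * t u) - \<psi> u * t u - \<psi> u * (s u * t u) \<partial>\<mu>)"
    by (simp add: algebra_simps)
  also have "\<dots> = (\<integral>u. \<psi> u * (exp (s u) * t u) \<partial>\<mu>) - (\<integral>u. \<psi> u * t u \<partial>\<mu>) - (\<integral>u. \<psi> u * (s u * t u) \<partial>\<mu>)"
    using iet it ist by simp
  finally have e2: "(\<integral>u. \<psi> u * (t u * (exp (s u) - 1 - s u)) \<partial>\<mu>) = a * Z - Et * Z - Est * Z"
    using Zpos by (simp add: a_def Et_def Est_def mult.assoc)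
  have bEta: "\<bar>\<eta>\<bar> \<le> \<kappa> * \<delta>\<^sup>2"
  proof -
    have "\<bar>a * Z - Et * Z - Est * Z\<bar> \<le> (\<kappa> * \<delta>\<^sup>2) * Z"
      using wt_bound[OF int _ _ qt] pos sm tm e2 by (simp add: less_imp_le Z_def)
    moreover have "a * Z - Et * Z - Est * Z = \<eta> * Z" by (simp add: \<eta>_def algebra_simps)
    ultimately have "\<bar>\<eta>\<bar> * Z \<le> (\<kappa> * \<delta>\<^sup>2) * Z"
      by (simp add: abs_mult Zpos abs_of_pos)
    thus ?thesis using Zpos by simp
  qed
  have d2: "\<delta>\<^sup>2 \<le> \<delta> / 4"
  proof -
    have "\<delta> * \<delta> \<le> \<delta> * (1/4)" using d by (intro mult_left_mono) auto
    thus ?thesis by (simp add: power2_eq_square)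
  qed
  have r_eq: "r = 1 + Es + \<epsilon>" by (simp add: \<epsilon>_def)
  have rlo: "r \<ge> 1/2" using r_eq bEs bEps d d2 by (simp add: abs_le_iff) 
  have r1: "\<bar>r - 1\<bar> \<le> 5/4 * \<delta>" using r_eq bEs bEps d2 unfolding abs_le_iff by linarith
  show "\<bar>ln (\<integral>u. \<psi> u * exp (s u) \<partial>\<mu>) - ln Z - (\<integral>u. \<psi> u * s u \<partial>\<mu>) / Z\<bar> \<le> 5 * \<delta>\<^sup>2"
  proof -
    have "(\<integral>u. \<psi> u * exp (s u) \<partial>\<mu>) = r * Z" using Zpos by (simp add: r_def)
    hence "ln (\<integral>u. \<psi> u * exp (s u) \<partial>\<mu>) - ln Z = ln (1 + (r - 1))"
      using Zpos rlo by (simp add: ln_mult)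
    moreover have "\<bar>r - 1\<bar> \<le> 1/2" using r1 d by simp
    hence "\<bar>ln (1 + (r - 1)) - (r - 1)\<bar> \<le> 2 * (r - 1)\<^sup>2" by (rule abs_ln_one_plus_x_minus_x_bound)
    moreover have "(r - 1)\<^sup>2 \<le> (5/4 * \<delta>)\<^sup>2"
      using r1 by (metis abs_ge_zero power2_abs power_mono)
    ultimately have "\<bar>ln (\<integral>u. \<psi> u * exp (s u) \<partial>\<mu>) - ln Z - (r - 1)\<bar> \<le> 2 * (5/4 * \<delta>)\<^sup>2" by simp
    moreover have "r - 1 = Es + \<epsilon>" by (simp add: r_eq)
    moreover have "(5/4 * \<delta>)\<^sup>2 = 25/16 * \<delta>\<^sup>2" by (simp add: power2_eq_square)
    ultimately show ?thesis using bEps unfolding Es_def[symmetric] abs_le_iff by linarith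
  qed
  define Q where "Q = Et + Est - Es * Et"
  have bQ: "\<bar>Q\<bar> \<le> 3/2 * \<kappa>"
  proof -
    have "\<bar>Es * Et\<bar> \<le> \<delta> * \<kappa>" using bEs bEt by (simp add: abs_mult mult_mono)
    moreover have "\<delta> * \<kappa> \<le> (1/4) * \<kappa>" using d k by (intro mult_right_mono) auto
    ultimately show ?thesis using bEt bEst unfolding Q_def abs_le_iff by linarith
  qed
  have a_eq: "a = Et + Est + \<eta>" by (simp add: \<eta>_def)
  have key: "a - r * Q = \<eta> - Es * Est + Es\<^sup>2 * Et - \<epsilon> * Q"
    unfolding a_eq r_eq Q_def by (simp only: algebra_simps power2_eq_square)
  have "\<bar>a - r * Q\<bar> \<le> 9/2 * \<kappa> * \<delta>\<^sup>2"
  proof -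
    have "\<bar>Es * Est\<bar> \<le> \<delta> * (\<delta> * \<kappa>)" using bEs bEst by (simp add: abs_mult mult_mono)
    moreover have "\<bar>Es\<^sup>2 * Et\<bar> \<le> \<delta>\<^sup>2 * \<kappa>"
    proof -
      have "Es\<^sup>2 \<le> \<delta>\<^sup>2" using bEs by (metis abs_ge_zero power2_abs power_mono)
      thus ?thesis using bEt by (simp add: abs_mult mult_mono)
    qed
    moreover have "\<bar>\<epsilon> * Q\<bar> \<le> \<delta>\<^sup>2 * (3/2 * \<kappa>)" unfolding abs_mult using bEps bQ by (intro mult_mono) auto
    moreover have "\<delta> * (\<delta> * \<kappa>) = \<kappa> * \<delta>\<^sup>2" "\<delta>\<^sup>2 * \<kappa> = \<kappa> * \<delta>\<^sup>2" "\<delta>\<^sup>2 * (3/2 * \<kappa>) = 3/2 * (\<kappa> * \<delta>\<^sup>2)"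
      by (simp_all add: power2_eq_square)
    ultimately show ?thesis unfolding key using bEta unfolding abs_le_iff by linarith
  qed
  hence aQ: "\<bar>a / r - Q\<bar> \<le> 9 * \<kappa> * \<delta>\<^sup>2"
  proof -
    assume h: "\<bar>a - r * Q\<bar> \<le> 9/2 * \<kappa> * \<delta>\<^sup>2"
    have "a / r - Q = (a - r * Q) / r" using rlo by (simp add: diff_divide_distrib)
    hence "\<bar>a / r - Q\<bar> = \<bar>a - r * Q\<bar> / r" using rlo by simp
    also have "\<dots> \<le> (9/2 * \<kappa> * \<delta>\<^sup>2) / (1/2)"
      using h rlo k by (intro frac_le) auto
    finally show ?thesis by simp
  qed
  have ar: "(\<integral>u. \<psi> u * exp (s u) * t u \<partial>\<mu>) / (\<integral>u. \<psi> u * exp (s u) \<partial>\<mu>) = a / r"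
    using Zpos by (simp add: a_def r_def)
  show "\<bar>(\<integral>u. \<psi> u * exp (s u) * t u \<partial>\<mu>) / (\<integral>u. \<psi> u * exp (s u) \<partial>\<mu>) - (\<integral>u. \<psi> u * t u \<partial>\<mu>) / Z
          - ((\<integral>u. \<psi> u * (s u * t u) \<partial>\<mu>) / Z - (\<integral>u. \<psi> u * s u \<partial>\<mu>) / Z * ((\<integral>u. \<psi> u * t u \<partial>\<mu>) / Z))\<bar>
          \<le> 10 * \<delta>\<^sup>2 * \<kappa>"
    unfolding ar Et_def[symmetric] Est_def[symmetric] Es_def[symmetric]
  proof -
    have "0 \<le> \<kappa> * \<delta>\<^sup>2" using k by simp
    moreover have "a / r - Et - (Est - Es * Et) = a / r - Q" by (simp add: Q_def)
    moreover have "9 * \<kappa> * \<delta>\<^sup>2 = 9 * (\<kappa> * \<delta>\<^sup>2)" "10 * \<delta>\<^sup>2 * \<kappa> = 10 * (\<kappa> * \<delta>\<^sup>2)" by simp_all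
    ultimately show "\<bar>a / r - Et - (Est - Es * Et)\<bar> \<le> 10 * \<delta>\<^sup>2 * \<kappa>"
      using aQ by linarith
  qed
qed

lemma Zpos:
  fixes \<psi> :: "'a \<Rightarrow> real"
  assumes ps: "prob_space \<mu>" and int: "integrable \<mu> \<psi>" and pos: "\<And>u. 0 < \<psi> u"
  shows "(\<integral>u. \<psi> u \<partial>\<mu>) > 0"
proof -
  interpret prob_space \<mu> by (rule ps)
  have "(\<integral>u. \<psi> u \<partial>\<mu>) \<ge> 0" using pos by (intro integral_nonneg_AE) (auto simp: less_imp_le)
  moreover have "(\<integral>u. \<psi> u \<partial>\<mu>) \<noteq> 0"
  proof
    assume "(\<integral>u. \<psi> u \<partial>\<mu>) = 0"
    hence "AE u in \<mu>. \<psi> u = 0"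
      using integral_nonneg_eq_0_iff_AE[OF int] pos by (auto simp: less_imp_le)
    hence "AE u in \<mu>. False" by eventually_elim (use pos in \<open>auto simp: less_le\<close>)
    thus False by simp
  qed
  ultimately show ?thesis by simp
qed

lemma gibbs_lip:
  fixes \<psi> s :: "'a \<Rightarrow> real"
  assumes ps: "prob_space \<mu>" and int: "integrable \<mu> \<psi>" and pos: "\<And>u. 0 < \<psi> u"
    and sm: "s \<in> borel_measurable \<mu>" and sb: "AE u in \<mu>. \<bar>s u\<bar> \<le> \<delta>"
  shows "\<bar>ln (\<integral>u. \<psi> u * exp (s u) \<partial>\<mu>) - ln (\<integral>u. \<psi> u \<partial>\<mu>)\<bar> \<le> \<delta>"
proof -
  have Z: "(\<integral>u. \<psi> u \<partial>\<mu>) > 0" by (rule Zpos[OF ps int pos])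
  have se: "(\<lambda>u. exp (s u)) \<in> borel_measurable \<mu>" using sm by measurable
  have eb: "AE u in \<mu>. \<bar>exp (s u)\<bar> \<le> exp \<delta>" using sb by eventually_elim auto
  have ie: "integrable \<mu> (\<lambda>u. \<psi> u * exp (s u))" by (rule int_wt[OF int se eb])
  have Z2: "(\<integral>u. \<psi> u * exp (s u) \<partial>\<mu>) > 0"
    by (rule Zpos[OF ps ie]) (simp add: pos)
  have up: "(\<integral>u. \<psi> u * exp (s u) \<partial>\<mu>) \<le> (\<integral>u. exp \<delta> * \<psi> u \<partial>\<mu>)"
    using ie int sb by (intro integral_mono_AE) (auto elim!: eventually_mono simp: pos less_imp_le mult.commute intro!: mult_left_mono)
  have lo: "(\<integral>u. exp (-\<delta>) * \<psi> u \<partial>\<mu>) \<le> (\<integral>u. \<psi> u * exp (s u) \<partial>\<mu>)"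
    using ie int sb by (intro integral_mono_AE) (auto elim!: eventually_mono simp: pos less_imp_le mult.commute intro!: mult_left_mono)
  have "ln (\<integral>u. \<psi> u * exp (s u) \<partial>\<mu>) \<le> ln (exp \<delta> * (\<integral>u. \<psi> u \<partial>\<mu>))"
    using up Z Z2 by simp
  also have "\<dots> = \<delta> + ln (\<integral>u. \<psi> u \<partial>\<mu>)" using Z by (simp add: ln_mult)
  finally have 1: "ln (\<integral>u. \<psi> u * exp (s u) \<partial>\<mu>) \<le> \<delta> + ln (\<integral>u. \<psi> u \<partial>\<mu>)" .
  have "-\<delta> + ln (\<integral>u. \<psi> u \<partial>\<mu>) = ln (exp (-\<delta>) * (\<integral>u. \<psi> u \<partial>\<mu>))" using Z by (simp add: ln_mult)
  also have "\<dots> \<le> ln (\<integral>u. \<psi> u * exp (s u) \<partial>\<mu>)"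
    using lo Z Z2 by simp
  finally show ?thesis using 1 by (simp add: abs_le_iff)
qed

lemma inner_phi_bound:
  fixes x :: "'a::real_inner"
  assumes "norm p \<le> 1" shows "\<bar>x \<bullet> p\<bar> \<le> norm x"
proof -
  have "\<bar>x \<bullet> p\<bar> \<le> norm x * norm p" by (rule Cauchy_Schwarz_ineq2)
  also have "\<dots> \<le> norm x * 1" using assms by (intro mult_left_mono) auto
  finally show ?thesis by simp
qed

locale ptsetup =
  fixes \<mu> :: "'u measure" and F :: "'u \<Rightarrow> real" and \<phi> :: "'u \<Rightarrow> 'a::euclidean_space"
  assumes ps: "prob_space \<mu>" and Fm: "F \<in> borel_measurable \<mu>" and Fpos: "\<And>u. 0 < F u"
    and \<phi>m: "\<phi> \<in> borel_measurable \<mu>" and \<phi>b: "AE u in \<mu>. norm (\<phi> u) \<le> 1"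
begin

definition "Z x = (\<integral>u. F u * exp (x \<bullet> \<phi> u) \<partial>\<mu>)"
definition "Lp x = ln (Z x)"
definition "Gp x h = (\<integral>u. F u * exp (x \<bullet> \<phi> u) * (h \<bullet> \<phi> u) \<partial>\<mu>) / Z x"
definition "Hp x h k = (\<integral>u. F u * exp (x \<bullet> \<phi> u) * ((h \<bullet> \<phi> u) * (k \<bullet> \<phi> u)) \<partial>\<mu>) / Z x - Gp x h * Gp x k"

lemma ib: "AE u in \<mu>. \<bar>h \<bullet> \<phi> u\<bar> \<le> norm h"
  using \<phi>b by eventually_elim (rule inner_phi_bound)

lemma im: "(\<lambda>u. h \<bullet> \<phi> u) \<in> borel_measurable \<mu>"
  using \<phi>m by measurable

lemma psi_int:
  assumes "integrable \<mu> F" shows "integrable \<mu> (\<lambda>u. F u * exp (x \<bullet> \<phi> u))"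
proof (rule int_wt[OF assms])
  show "(\<lambda>u. exp (x \<bullet> \<phi> u)) \<in> borel_measurable \<mu>" using \<phi>m by measurable
  show "AE u in \<mu>. \<bar>exp (x \<bullet> \<phi> u)\<bar> \<le> exp (norm x)"
    using ib[of x] by eventually_elim auto
qed

lemma nonint:
  assumes "\<not> integrable \<mu> F" shows "Z x = 0"
proof -
  have "\<not> integrable \<mu> (\<lambda>u. F u * exp (x \<bullet> \<phi> u))"
  proof
    assume i: "integrable \<mu> (\<lambda>u. F u * exp (x \<bullet> \<phi> u))"
    have "integrable \<mu> (\<lambda>u. (F u * exp (x \<bullet> \<phi> u)) * exp ((-x) \<bullet> \<phi> u))"
    proof (rule int_wt[OF i])
      show "(\<lambda>u. exp ((-x) \<bullet> \<phi> u)) \<in> borel_measurable \<mu>" using \<phi>m by measurable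
      show "AE u in \<mu>. \<bar>exp ((-x) \<bullet> \<phi> u)\<bar> \<le> exp (norm (-x))"
        using ib[of "-x"] by eventually_elim auto
    qed
    moreover have "(\<lambda>u. (F u * exp (x \<bullet> \<phi> u)) * exp ((-x) \<bullet> \<phi> u)) = F"
      by (auto simp: fun_eq_iff mult.assoc exp_minus[symmetric] exp_add[symmetric] simp del: exp_minus)
    ultimately show False using assms by simp
  qed
  thus ?thesis by (simp add: Z_def not_integrable_integral_eq)
qed

lemma shift_eq: "F u * exp (x \<bullet> \<phi> u) * exp (h \<bullet> \<phi> u) = F u * exp ((x + h) \<bullet> \<phi> u)"
  by (simp add: inner_add_left exp_add mult.assoc)

lemma pos_psi: "0 < F u * exp (x \<bullet> \<phi> u)" using Fpos by simp

lemma Lip: "\<bar>Lp x' - Lp x\<bar> \<le> norm (x' - x)"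
proof (cases "integrable \<mu> F")
  case True
  have "\<bar>ln (\<integral>u. F u * exp (x \<bullet> \<phi> u) * exp ((x' - x) \<bullet> \<phi> u) \<partial>\<mu>) - ln (\<integral>u. F u * exp (x \<bullet> \<phi> u) \<partial>\<mu>)\<bar> \<le> norm (x' - x)"
    by (rule gibbs_lip[OF ps psi_int[OF True] pos_psi im ib])
  thus ?thesis unfolding shift_eq by (simp add: Lp_def Z_def)
qed (simp add: Lp_def nonint)

lemma A: assumes "norm h \<le> 1/4" shows "\<bar>Lp (x + h) - Lp x - Gp x h\<bar> \<le> 5 * (norm h)\<^sup>2"
proof (cases "integrable \<mu> F")
  case True
  have "\<bar>ln (\<integral>u. F u * exp (x \<bullet> \<phi> u) * exp (h \<bullet> \<phi> u) \<partial>\<mu>) - ln (\<integral>u. F u * exp (x \<bullet> \<phi> u) \<partial>\<mu>)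
     - (\<integral>u. F u * exp (x \<bullet> \<phi> u) * (h \<bullet> \<phi> u) \<partial>\<mu>) / (\<integral>u. F u * exp (x \<bullet> \<phi> u) \<partial>\<mu>)\<bar> \<le> 5 * (norm h)\<^sup>2"
    by (rule gibbs(1)[OF ps psi_int[OF True] pos_psi im im ib ib _ assms]) auto
  thus ?thesis unfolding shift_eq by (simp add: Lp_def Z_def Gp_def)
qed (simp add: Lp_def Gp_def nonint)

lemma B: assumes "norm h \<le> 1/4" shows "\<bar>Gp (x + h) k - Gp x k - Hp x h k\<bar> \<le> 10 * (norm h)\<^sup>2 * norm k"
proof (cases "integrable \<mu> F")
  case True
  have "\<bar>(\<integral>u. F u * exp (x \<bullet> \<phi> u) * exp (h \<bullet> \<phi> u) * (k \<bullet> \<phi> u) \<partial>\<mu>) / (\<integral>u. F u * exp (x \<bullet> \<phi> u) * exp (h \<bullet> \<phi> u) \<partial>\<mu>)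
     - (\<integral>u. F u * exp (x \<bullet> \<phi> u) * (k \<bullet> \<phi> u) \<partial>\<mu>) / (\<integral>u. F u * exp (x \<bullet> \<phi> u) \<partial>\<mu>)
     - ((\<integral>u. F u * exp (x \<bullet> \<phi> u) * ((h \<bullet> \<phi> u) * (k \<bullet> \<phi> u)) \<partial>\<mu>) / (\<integral>u. F u * exp (x \<bullet> \<phi> u) \<partial>\<mu>)
       - (\<integral>u. F u * exp (x \<bullet> \<phi> u) * (h \<bullet> \<phi> u) \<partial>\<mu>) / (\<integral>u. F u * exp (x \<bullet> \<phi> u) \<partial>\<mu>)
         * ((\<integral>u. F u * exp (x \<bullet> \<phi> u) * (k \<bullet> \<phi> u) \<partial>\<mu>) / (\<integral>u. F u * exp (x \<bullet> \<phi> u) \<partial>\<mu>)))\<bar>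
     \<le> 10 * (norm h)\<^sup>2 * norm k"
    by (rule gibbs(2)[OF ps psi_int[OF True] pos_psi im im ib ib _ assms]) auto
  thus ?thesis unfolding shift_eq by (simp add: Z_def Gp_def Hp_def)
qed (simp add: Hp_def Gp_def nonint)

lemma bG: "\<bar>Gp x h\<bar> \<le> norm h"
proof (cases "integrable \<mu> F")
  case True
  have Zp: "Z x > 0" unfolding Z_def by (rule Zpos[OF ps psi_int[OF True] pos_psi])
  have "\<bar>\<integral>u. F u * exp (x \<bullet> \<phi> u) * (h \<bullet> \<phi> u) \<partial>\<mu>\<bar> \<le> norm h * Z x"
    unfolding Z_def by (rule wt_bound[OF psi_int[OF True] _ im ib]) (rule less_imp_le[OF pos_psi])
  thus ?thesis using Zp by (simp add: Gp_def abs_div divide_le_eq)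
qed (simp add: Gp_def nonint)

lemma bH: "\<bar>Hp x h k\<bar> \<le> 2 * norm h * norm k"
proof (cases "integrable \<mu> F")
  case True
  have Zp: "Z x > 0" unfolding Z_def by (rule Zpos[OF ps psi_int[OF True] pos_psi])
  have st: "AE u in \<mu>. \<bar>(h \<bullet> \<phi> u) * (k \<bullet> \<phi> u)\<bar> \<le> norm h * norm k"
    using ib[of h] ib[of k] by eventually_elim (auto simp: abs_mult intro!: mult_mono)
  have "\<bar>\<integral>u. F u * exp (x \<bullet> \<phi> u) * ((h \<bullet> \<phi> u) * (k \<bullet> \<phi> u)) \<partial>\<mu>\<bar> \<le> (norm h * norm k) * Z x"
    unfolding Z_def by (rule wt_bound[OF psi_int[OF True] _ _ st]) (auto intro: less_imp_le[OF pos_psi] borel_measurable_times im)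
  hence 1: "\<bar>(\<integral>u. F u * exp (x \<bullet> \<phi> u) * ((h \<bullet> \<phi> u) * (k \<bullet> \<phi> u)) \<partial>\<mu>) / Z x\<bar> \<le> norm h * norm k"
    using Zp by (simp add: abs_div divide_le_eq)
  have 2: "\<bar>Gp x h * Gp x k\<bar> \<le> norm h * norm k" unfolding abs_mult by (intro mult_mono bG) auto
  show ?thesis using 1 2 unfolding Hp_def by linarith
qed (simp add: Hp_def Gp_def nonint)

lemma int_hphi: "integrable \<mu> F \<Longrightarrow> integrable \<mu> (\<lambda>u. F u * exp (x \<bullet> \<phi> u) * (h \<bullet> \<phi> u))"
  by (rule int_wt[OF psi_int im ib])

lemma int_hkphi: "integrable \<mu> F \<Longrightarrow> integrable \<mu> (\<lambda>u. F u * exp (x \<bullet> \<phi> u) * ((h \<bullet> \<phi> u) * (k \<bullet> \<phi> u)))"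
proof (rule int_wt[OF psi_int])
  show "(\<lambda>u. (h \<bullet> \<phi> u) * (k \<bullet> \<phi> u)) \<in> borel_measurable \<mu>" by (intro borel_measurable_times im)
  show "AE u in \<mu>. \<bar>(h \<bullet> \<phi> u) * (k \<bullet> \<phi> u)\<bar> \<le> norm h * norm k"
    using ib[of h] ib[of k] by eventually_elim (auto simp: abs_mult intro!: mult_mono)
qed

lemma Gp_add: "Gp x (h + h') = Gp x h + Gp x h'"
proof (cases "integrable \<mu> F")
  case True
  show ?thesis unfolding Gp_def
    using int_hphi[OF True, of x h] int_hphi[OF True, of x h']
    by (simp add: inner_add_left distrib_left add_divide_distrib)
qed (simp add: Gp_def nonint)

lemma Gp_scale: "Gp x (c *\<^sub>R h) = c * Gp x h"
  unfolding Gp_def by (simp add: mult.left_commute[of _ c])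

lemma Hp_sym: "Hp x h k = Hp x k h"
  unfolding Hp_def by (simp add: mult.commute)

lemma Hp_add: "Hp x (h + h') k = Hp x h k + Hp x h' k"
proof (cases "integrable \<mu> F")
  case True
  show ?thesis unfolding Hp_def Gp_add
    using int_hkphi[OF True, of x h k] int_hkphi[OF True, of x h' k]
    by (simp add: inner_add_left distrib_left distrib_right add_divide_distrib)
qed (simp add: Hp_def Gp_def nonint)

lemma Hp_scale: "Hp x (c *\<^sub>R h) k = c * Hp x h k"
proof -
  have "(\<lambda>u. F u * exp (x \<bullet> \<phi> u) * (((c *\<^sub>R h) \<bullet> \<phi> u) * (k \<bullet> \<phi> u))) = (\<lambda>u. c * (F u * exp (x \<bullet> \<phi> u) * ((h \<bullet> \<phi> u) * (k \<bullet> \<phi> u))))"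
    by (simp add: fun_eq_iff)
  thus ?thesis unfolding Hp_def Gp_scale by (simp add: right_diff_distrib)
qed

end

lemma quad_deriv:
  fixes f :: "'a::real_normed_vector \<Rightarrow> 'b::real_normed_vector"
  assumes bl: "bounded_linear D" and r: "r > 0"
    and b: "\<And>h. norm h \<le> r \<Longrightarrow> norm (f (x + h) - f x - D h) \<le> C * (norm h)\<^sup>2"
  shows "(f has_derivative D) (at x)"
  unfolding has_derivative_at2
proof (intro conjI bl, rule Lim_null_comparison)
  show "\<forall>\<^sub>F y in at x. norm ((1 / norm (y - x)) *\<^sub>R (f y - (f x + D (y - x)))) \<le> C * norm (y - x)"
    unfolding eventually_at
  proof (intro exI[of _ r] conjI allI ballI impI r)
    fix y assume y: "y \<noteq> x \<and> dist y x < r"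
    hence n: "norm (y - x) > 0" "norm (y - x) \<le> r" by (auto simp: dist_norm)
    have "norm (f (x + (y - x)) - f x - D (y - x)) \<le> C * (norm (y - x))\<^sup>2" by (rule b) (use n in auto)
    hence "norm (f y - (f x + D (y - x))) \<le> C * (norm (y - x))\<^sup>2" by (simp add: algebra_simps)
    thus "norm ((1 / norm (y - x)) *\<^sub>R (f y - (f x + D (y - x)))) \<le> C * norm (y - x)"
      using n by (simp add: divide_le_eq power2_eq_square mult.assoc)
  qed
  show "((\<lambda>y. C * norm (y - x)) \<longlongrightarrow> 0) (at x)"
    by (intro tendsto_mult_right_zero tendsto_norm_zero LIM_zero tendsto_ident_at)
qed

lemma abs_main:
  fixes p :: "'a::euclidean_space \<Rightarrow> real" and G :: "'a \<Rightarrow> 'a \<Rightarrow> real" and H :: "'a \<Rightarrow> 'a \<Rightarrow> 'a \<Rightarrow> real"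
  assumes linG: "\<And>x. linear (G x)" and linH1: "\<And>x k. linear (\<lambda>h. H x h k)" and linH2: "\<And>x h. linear (H x h)"
    and bG: "\<And>x h. \<bar>G x h\<bar> \<le> norm h" and bH: "\<And>x h k. \<bar>H x h k\<bar> \<le> 2 * norm h * norm k"
    and A: "\<And>x h. norm h \<le> 1/4 \<Longrightarrow> \<bar>p (x + h) - p x - G x h\<bar> \<le> 5 * (norm h)\<^sup>2"
    and B: "\<And>x h k. norm h \<le> 1/4 \<Longrightarrow> \<bar>G (x + h) k - G x k - H x h k\<bar> \<le> 10 * (norm h)\<^sup>2 * norm k"
  shows "twice_differentiable_on p S \<and>
    (\<forall>x y. norm y \<le> 1 \<longrightarrow>
       \<bar>deriv (\<lambda>r. p (x + r *\<^sub>R y)) 0\<bar> + \<bar>deriv (\<lambda>r. deriv (\<lambda>s. p (x + s *\<^sub>R y)) r) 0\<bar> \<le> 3)"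
proof -
  have blG: "bounded_linear (G x)" for x by (rule linear_conv_bounded_linear[THEN iffD1, OF linG])
  define f' where "f' x = Blinfun (G x)" for x
  have f'a: "blinfun_apply (f' x) = G x" for x unfolding f'_def by (rule bounded_linear_Blinfun_apply[OF blG])
  define D where "D x h = Blinfun (H x h)" for x h
  have Da: "blinfun_apply (D x h) = H x h" for x h
    unfolding D_def by (rule bounded_linear_Blinfun_apply[OF linear_conv_bounded_linear[THEN iffD1, OF linH2]])
  have linD: "linear (D x)" for x
  proof (rule linearI)
    fix h h' show "D x (h + h') = D x h + D x h'"
      by (rule blinfun_eqI) (simp add: Da plus_blinfun.rep_eq linear_add[OF linH1])
  next
    fix c h show "D x (c *\<^sub>R h) = c *\<^sub>R D x h"
      by (rule blinfun_eqI) (simp add: Da scaleR_blinfun.rep_eq linear_scale[OF linH1])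
  qed
  have blD: "bounded_linear (D x)" for x by (rule linear_conv_bounded_linear[THEN iffD1, OF linD])
  have dp: "(p has_derivative G x) (at x)" for x
    by (rule quad_deriv[OF blG, where r="1/4" and C=5]) (use A in auto)
  have df': "(f' has_derivative D x) (at x)" for x
  proof (rule quad_deriv[OF blD, where r="1/4" and C=10])
    fix h :: 'a assume h: "norm h \<le> 1/4"
    show "norm (f' (x + h) - f' x - D x h) \<le> 10 * (norm h)\<^sup>2"
    proof (rule norm_blinfun_bound)
      fix k
      show "norm (blinfun_apply (f' (x + h) - f' x - D x h) k) \<le> 10 * (norm h)\<^sup>2 * norm k"
        using B[OF h, of x k] by (simp add: minus_blinfun.rep_eq f'a Da)
    qed simp
  qed simp
  have tw: "twice_differentiable_on p S"
    unfolding twice_differentiable_on_def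
  proof (intro exI[of _ f'] conjI ballI)
    fix x show "(p has_derivative blinfun_apply (f' x)) (at x within S)"
      unfolding f'a by (rule has_derivative_at_withinI[OF dp])
    show "f' differentiable at x within S"
      unfolding differentiable_def by (intro exI[of _ "D x"] has_derivative_at_withinI[OF df'])
  qed
  have line: "((\<lambda>r. x + r *\<^sub>R y) has_derivative (\<lambda>t. t *\<^sub>R y)) (at r)" for x y :: 'a and r :: real
    by (auto intro!: derivative_eq_intros)
  have d1: "((\<lambda>r. p (x + r *\<^sub>R y)) has_field_derivative G (x + r *\<^sub>R y) y) (at r)" for x y r
  proof -
    have "((p \<circ> (\<lambda>r. x + r *\<^sub>R y)) has_derivative (G (x + r *\<^sub>R y) \<circ> (\<lambda>t. t *\<^sub>R y))) (at r)"
      by (rule diff_chain_at[OF line dp])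
    moreover have "(G (x + r *\<^sub>R y) \<circ> (\<lambda>t. t *\<^sub>R y)) = (\<lambda>t. G (x + r *\<^sub>R y) y * t)"
      by (auto simp: fun_eq_iff linear_scale[OF linG])
    ultimately show ?thesis by (simp add: has_field_derivative_def o_def)
  qed
  have dd1: "deriv (\<lambda>s. p (x + s *\<^sub>R y)) = (\<lambda>r. G (x + r *\<^sub>R y) y)" for x y
    using d1 DERIV_imp_deriv by blast
  have d2: "((\<lambda>r. G (x + r *\<^sub>R y) y) has_field_derivative H x y y) (at 0)" for x y
  proof -
    have l0: "((\<lambda>r. x + r *\<^sub>R y) has_derivative (\<lambda>t. t *\<^sub>R y)) (at 0)" by (rule line)
    have "((f' \<circ> (\<lambda>r. x + r *\<^sub>R y)) has_derivative (D x \<circ> (\<lambda>t. t *\<^sub>R y))) (at 0)"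
      by (rule diff_chain_at[OF l0]) (simp add: df')
    hence "((\<lambda>r. blinfun_apply ((f' \<circ> (\<lambda>r. x + r *\<^sub>R y)) r) y) has_derivative (\<lambda>t. blinfun_apply ((D x \<circ> (\<lambda>t. t *\<^sub>R y)) t) y)) (at 0)"
      by (rule bounded_linear.has_derivative[OF blinfun.bounded_linear_left])
    moreover have "(\<lambda>t. blinfun_apply ((D x \<circ> (\<lambda>t. t *\<^sub>R y)) t) y) = (\<lambda>t. H x y y * t)"
      by (auto simp: fun_eq_iff Da linear_scale[OF linH1])
    ultimately show ?thesis by (simp add: has_field_derivative_def o_def f'a)
  qed
  show ?thesis
  proof (intro conjI tw allI impI)
    fix x y :: 'a assume y: "norm y \<le> 1"
    have "deriv (\<lambda>r. p (x + r *\<^sub>R y)) 0 = G x y" unfolding dd1 by simp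
    moreover have "deriv (\<lambda>r. deriv (\<lambda>s. p (x + s *\<^sub>R y)) r) 0 = H x y y"
      unfolding dd1 by (rule DERIV_imp_deriv[OF d2])
    moreover have "\<bar>G x y\<bar> \<le> 1" using bG[of x y] y by simp
    moreover have "\<bar>H x y y\<bar> \<le> 2"
    proof -
      have "norm y * norm y \<le> 1 * 1" using y by (intro mult_mono) auto
      thus ?thesis using bH[of x y y] by simp
    qed
    ultimately show "\<bar>deriv (\<lambda>r. p (x + r *\<^sub>R y)) 0\<bar> + \<bar>deriv (\<lambda>r. deriv (\<lambda>s. p (x + s *\<^sub>R y)) r) 0\<bar> \<le> 3"
      by simp
  qed
qed

lemma kernel_int_meas:
  fixes f :: "'a \<Rightarrow> 'b \<Rightarrow> real"
  assumes K: "K \<in> \<Omega> \<rightarrow>\<^sub>M subprob_algebra U"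
    and f: "(\<lambda>(x, y). f x y) \<in> borel_measurable (\<Omega> \<Otimes>\<^sub>M U)"
  shows "(\<lambda>x. \<integral>y. f x y \<partial>K x) \<in> borel_measurable \<Omega>"
proof -
  have d: "(\<lambda>x. distr (K x) (\<Omega> \<Otimes>\<^sub>M U) (Pair x)) \<in> \<Omega> \<rightarrow>\<^sub>M subprob_algebra (\<Omega> \<Otimes>\<^sub>M U)"
    by (rule measurable_distr2[where f=Pair and M=U, OF _ K]) (simp add: case_prod_Pair measurable_id)
  have "(\<lambda>x. \<integral>z. (\<lambda>(x, y). f x y) z \<partial>distr (K x) (\<Omega> \<Otimes>\<^sub>M U) (Pair x)) \<in> borel_measurable \<Omega>"
    by (rule measurable_compose[OF d integral_measurable_subprob_algebra[OF f]])
  moreover have "(\<integral>z. (\<lambda>(x, y). f x y) z \<partial>distr (K x) (\<Omega> \<Otimes>\<^sub>M U) (Pair x)) = (\<integral>y. f x y \<partial>K x)"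
    if x: "x \<in> space \<Omega>" for x
  proof -
    have sK: "sets (K x) = sets U" using measurable_space[OF K x] by (simp add: space_subprob_algebra)
    have "Pair x \<in> measurable (K x) (\<Omega> \<Otimes>\<^sub>M U)"
      using x by (simp add: measurable_Pair1' cong: measurable_cong_sets[OF sK refl])
    thus ?thesis by (subst integral_distr[OF _ f]) auto
  qed
  ultimately show ?thesis by (rule measurable_cong[THEN iffD1, rotated]) simp
qed

lemma prob_abs_bound:
  fixes f :: "'a \<Rightarrow> real"
  assumes ps: "prob_space \<Omega>" and fm: "f \<in> borel_measurable \<Omega>" and b: "\<And>x. x \<in> space \<Omega> \<Longrightarrow> \<bar>f x\<bar> \<le> B"
  shows "integrable \<Omega> f" "\<bar>\<integral>x. f x \<partial>\<Omega>\<bar> \<le> B"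
proof -
  interpret prob_space \<Omega> by (rule ps)
  show i: "integrable \<Omega> f"
    by (rule integrable_const_bound[where B=B]) (use fm b in auto)
  have "\<bar>\<integral>x. f x \<partial>\<Omega>\<bar> \<le> (\<integral>x. \<bar>f x\<bar> \<partial>\<Omega>)" by (rule integral_abs_bound)
  also have "\<dots> \<le> B" by (rule integral_le_const) (use i b in auto)
  finally show "\<bar>\<integral>x. f x \<partial>\<Omega>\<bar> \<le> B" .
qed

theorem lemma2p2:
  fixes M :: "'w measure" and N :: "'e measure"
    and R :: "'w \<Rightarrow> 'h::{real_inner,polish_space} measure"
    and P1 :: "(real ^ 'd::finite) measure"
    and \<xi> :: "'d mat \<Rightarrow> real" and g :: "'d mat \<Rightarrow> 'd mat"
    and w :: "(real \<Rightarrow> 'd mat) \<Rightarrow> 'w \<Rightarrow> 'e \<Rightarrow> 'h \<Rightarrow> real ^ 'd"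
  assumes P1: "prob_space P1" "sets P1 = sets borel" "emeasure P1 (cball 0 1) = 1"
    and xi: "xi_assm \<xi> g"
    and RPC: "is_RPC M R"
    and N: "prob_space N"
    and w: "\<And>\<pi>. \<pi> \<in> Pi_paths \<Longrightarrow> cond_gauss_proc M N R (g \<circ> \<pi>) (w \<pi>)"
  shows "\<forall>\<pi>\<in>Pi_paths.
           twice_differentiable_on (Pfun M N R (w \<pi>) P1 \<xi> g \<pi>) {x. symm x} \<and>
           (\<forall>x y. symm x \<longrightarrow> symm y \<longrightarrow> norm y \<le> 1 \<longrightarrow>
              \<bar>deriv (\<lambda>r. Pfun M N R (w \<pi>) P1 \<xi> g \<pi> (x + r *\<^sub>R y)) 0\<bar>
              + \<bar>deriv (\<lambda>r. deriv (\<lambda>s. Pfun M N R (w \<pi>) P1 \<xi> g \<pi> (x + s *\<^sub>R y)) r) 0\<bar> \<le> 3)"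
proof (intro ballI)
  fix \<pi> :: "real \<Rightarrow> 'd mat" assume \<pi>: "\<pi> \<in> Pi_paths"
  from RPC have psM: "prob_space M" and Rm: "R \<in> M \<rightarrow>\<^sub>M prob_algebra borel" by (auto simp: is_RPC_def)
  from w[OF \<pi>] have wm: "(\<lambda>((\<omega>, \<eta>), a). w \<pi> \<omega> \<eta> a) \<in> borel_measurable ((M \<Otimes>\<^sub>M N) \<Otimes>\<^sub>M borel)"
    by (simp add: cond_gauss_proc_def)
  define \<Omega> where "\<Omega> = M \<Otimes>\<^sub>M N"
  have ps\<Omega>: "prob_space \<Omega>" unfolding \<Omega>_def by (rule prob_space_pair[OF psM N])
  define \<mu> where "\<mu> \<omega>\<eta> = P1 \<Otimes>\<^sub>M R (fst \<omega>\<eta>)" for \<omega>\<eta> :: "'w \<times> 'e"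
  define \<phi> where "\<phi> u = outer (fst u) (fst u)" for u :: "(real^'d) \<times> 'h"
  define F where "F \<omega>\<eta> u = exp (w \<pi> (fst \<omega>\<eta>) (snd \<omega>\<eta>) (snd u) \<bullet> fst u - 1/2 * (g (\<pi> 1) \<bullet> outer (fst u) (fst u)))"
    for \<omega>\<eta> :: "'w \<times> 'e" and u :: "(real^'d) \<times> 'h"
  have P1sp: "P1 \<in> space (prob_algebra P1)" using P1(1) by (simp add: space_prob_algebra)
  have Km: "\<mu> \<in> \<Omega> \<rightarrow>\<^sub>M prob_algebra (P1 \<Otimes>\<^sub>M borel)"
    unfolding \<mu>_def \<Omega>_def
    by (rule measurable_pair_prob[OF measurable_const[OF P1sp] measurable_compose[OF measurable_fst Rm]])
  have sU: "sets (P1 \<Otimes>\<^sub>M (borel :: 'h measure)) = sets (borel \<Otimes>\<^sub>M borel)"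
    by (rule sets_pair_measure_cong[OF P1(2) refl])
  have outm[measurable]: "(\<lambda>t::real^'d. outer t t) \<in> borel_measurable borel"
    by (rule borel_measurable_continuous_onI[OF cont_outer])
  have wpart[measurable]: "(\<lambda>z. w \<pi> (fst (fst z)) (snd (fst z)) (snd (snd z))) \<in> borel_measurable (\<Omega> \<Otimes>\<^sub>M (borel \<Otimes>\<^sub>M (borel :: 'h measure)))"
  proof -
    have "(\<lambda>z. (fst z, snd (snd z))) \<in> (\<Omega> \<Otimes>\<^sub>M (borel \<Otimes>\<^sub>M (borel :: 'h measure))) \<rightarrow>\<^sub>M (\<Omega> \<Otimes>\<^sub>M borel)"
      by measurable
    from measurable_compose[OF this wm[folded \<Omega>_def]] show ?thesis
      by (simp add: case_prod_beta)
  qed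
  have Fj: "(\<lambda>z. F (fst z) (snd z)) \<in> borel_measurable (\<Omega> \<Otimes>\<^sub>M (borel \<Otimes>\<^sub>M (borel :: 'h measure)))"
    unfolding F_def by measurable
  have smu: "sets (\<mu> \<omega>\<eta>) = sets (borel \<Otimes>\<^sub>M (borel :: 'h measure))" and psmu: "prob_space (\<mu> \<omega>\<eta>)"
    and psR: "prob_space (R (fst \<omega>\<eta>))"
    if "\<omega>\<eta> \<in> space \<Omega>" for \<omega>\<eta>
  proof -
    have "fst \<omega>\<eta> \<in> space M" using that by (auto simp: \<Omega>_def space_pair_measure)
    hence "R (fst \<omega>\<eta>) \<in> space (prob_algebra borel)" by (rule measurable_space[OF Rm])
    hence sR: "sets (R (fst \<omega>\<eta>)) = sets borel" and pR: "prob_space (R (fst \<omega>\<eta>))"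
      by (auto simp: space_prob_algebra)
    show "sets (\<mu> \<omega>\<eta>) = sets (borel \<Otimes>\<^sub>M (borel :: 'h measure))"
      unfolding \<mu>_def by (rule sets_pair_measure_cong[OF P1(2) sR])
    show "prob_space (\<mu> \<omega>\<eta>)" unfolding \<mu>_def by (rule prob_space_pair[OF P1(1) pR])
    show "prob_space (R (fst \<omega>\<eta>))" by (rule pR)
  qed
  have AEP1: "AE t in P1. norm t \<le> 1"
  proof -
    interpret P: prob_space P1 by (rule P1(1))
    have c: "cball 0 1 \<in> sets P1" using P1(2) by simp
    have p: "P.prob (cball 0 1) = 1" using P1(3) by (simp add: P.emeasure_eq_measure)
    have "AE t in P1. t \<in> cball 0 1" by (rule iffD2[OF P.AE_in_set_eq_1[OF c] p])
    thus ?thesis by (simp add: dist_norm)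
  qed
  have pts: "ptsetup (\<mu> \<omega>\<eta>) (F \<omega>\<eta>) \<phi>" if om: "\<omega>\<eta> \<in> space \<Omega>" for \<omega>\<eta>
  proof (rule ptsetup.intro)
    show "prob_space (\<mu> \<omega>\<eta>)" by (rule psmu[OF om])
    have "(\<lambda>y. F (fst (\<omega>\<eta>, y)) (snd (\<omega>\<eta>, y))) \<in> borel_measurable (borel \<Otimes>\<^sub>M (borel :: 'h measure))"
      by (rule measurable_Pair2[OF Fj om])
    thus "F \<omega>\<eta> \<in> borel_measurable (\<mu> \<omega>\<eta>)"
      by (simp cong: measurable_cong_sets[OF smu[OF om] refl])
    show "\<And>u. 0 < F \<omega>\<eta> u" by (simp add: F_def)
    have "\<phi> \<in> borel_measurable (borel \<Otimes>\<^sub>M (borel :: 'h measure))" unfolding \<phi>_def by measurable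
    thus "\<phi> \<in> borel_measurable (\<mu> \<omega>\<eta>)"
      by (simp cong: measurable_cong_sets[OF smu[OF om] refl])
    interpret R: prob_space "R (fst \<omega>\<eta>)" by (rule psR[OF om])
    interpret P1s: prob_space P1 by (rule P1(1))
    interpret PR: pair_prob_space P1 "R (fst \<omega>\<eta>)" ..
    show "AE u in \<mu> \<omega>\<eta>. norm (\<phi> u) \<le> 1"
      unfolding \<mu>_def
    proof (rule PR.AE_pair_measure)
      have "\<phi> \<in> borel_measurable (P1 \<Otimes>\<^sub>M R (fst \<omega>\<eta>))"
        using \<open>\<phi> \<in> borel_measurable (\<mu> \<omega>\<eta>)\<close> by (simp add: \<mu>_def)
      thus "{x \<in> space (P1 \<Otimes>\<^sub>M R (fst \<omega>\<eta>)). norm (\<phi> x) \<le> 1} \<in> sets (P1 \<Otimes>\<^sub>M R (fst \<omega>\<eta>))"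
        by measurable
      show "AE x in P1. AE y in R (fst \<omega>\<eta>). norm (\<phi> (x, y)) \<le> 1"
        using AEP1
      proof eventually_elim
        case (elim t)
        have "norm t * norm t \<le> 1 * 1" using elim by (intro mult_mono) auto
        thus ?case by (simp add: \<phi>_def norm_outer)
      qed
    qed
  qed
  define Zq where "Zq x \<omega>\<eta> = (\<integral>u. F \<omega>\<eta> u * exp (x \<bullet> \<phi> u) \<partial>\<mu> \<omega>\<eta>)" for x \<omega>\<eta>
  define Lq where "Lq x \<omega>\<eta> = ln (Zq x \<omega>\<eta>)" for x \<omega>\<eta>
  define Gq where "Gq x h \<omega>\<eta> = (\<integral>u. F \<omega>\<eta> u * exp (x \<bullet> \<phi> u) * (h \<bullet> \<phi> u) \<partial>\<mu> \<omega>\<eta>) / Zq x \<omega>\<eta>" for x h \<omega>\<eta>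
  define Hq where "Hq x h k \<omega>\<eta> = (\<integral>u. F \<omega>\<eta> u * exp (x \<bullet> \<phi> u) * ((h \<bullet> \<phi> u) * (k \<bullet> \<phi> u)) \<partial>\<mu> \<omega>\<eta>) / Zq x \<omega>\<eta>
      - Gq x h \<omega>\<eta> * Gq x k \<omega>\<eta>" for x h k \<omega>\<eta>
  have eqL: "ptsetup.Lp (\<mu> \<omega>\<eta>) (F \<omega>\<eta>) \<phi> x = Lq x \<omega>\<eta>"
    and eqG: "ptsetup.Gp (\<mu> \<omega>\<eta>) (F \<omega>\<eta>) \<phi> x h = Gq x h \<omega>\<eta>"
    and eqH: "ptsetup.Hp (\<mu> \<omega>\<eta>) (F \<omega>\<eta>) \<phi> x h k = Hq x h k \<omega>\<eta>"
    if "\<omega>\<eta> \<in> space \<Omega>" for x h k \<omega>\<eta>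
    using pts[OF that]
    by (simp_all add: ptsetup.Lp_def ptsetup.Z_def ptsetup.Gp_def ptsetup.Hp_def Lq_def Zq_def Gq_def Hq_def)
  define Kc where "Kc = 1/2 * (\<integral>s. indicator {0..1} s * theta \<xi> g (\<pi> s) \<partial>lborel)"
  have Peq: "Pfun M N R (w \<pi>) P1 \<xi> g \<pi> x = (\<integral>\<omega>\<eta>. Lq x \<omega>\<eta> \<partial>\<Omega>) + Kc" for x
    unfolding Pfun_def Lq_def Zq_def Kc_def \<Omega>_def \<mu>_def
    by (simp add: exp_add F_def \<phi>_def)
  have measK: "(\<lambda>\<omega>\<eta>. \<integral>u. f \<omega>\<eta> u \<partial>\<mu> \<omega>\<eta>) \<in> borel_measurable \<Omega>"
    if "(\<lambda>z. f (fst z) (snd z)) \<in> borel_measurable (\<Omega> \<Otimes>\<^sub>M (borel \<Otimes>\<^sub>M (borel :: 'h measure)))"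
    for f :: "'w \<times> 'e \<Rightarrow> (real^'d) \<times> 'h \<Rightarrow> real"
  proof (rule kernel_int_meas[OF measurable_prob_algebraD[OF Km]])
    show "(\<lambda>(x, y). f x y) \<in> borel_measurable (\<Omega> \<Otimes>\<^sub>M (P1 \<Otimes>\<^sub>M borel))"
      using that by (simp add: case_prod_beta cong: measurable_cong_sets[OF sets_pair_measure_cong[OF refl sU] refl])
  qed
  have mZ: "Zq x \<in> borel_measurable \<Omega>" for x
    unfolding Zq_def by (rule measK) (use Fj in \<open>unfold \<phi>_def, measurable\<close>)
  have mLq: "Lq x \<in> borel_measurable \<Omega>" for x
    unfolding Lq_def using mZ by measurable
  have mGq: "Gq x h \<in> borel_measurable \<Omega>" for x h
  proof -
    have "(\<lambda>\<omega>\<eta>. \<integral>u. F \<omega>\<eta> u * exp (x \<bullet> \<phi> u) * (h \<bullet> \<phi> u) \<partial>\<mu> \<omega>\<eta>) \<in> borel_measurable \<Omega>"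
      by (rule measK) (use Fj in \<open>unfold \<phi>_def, measurable\<close>)
    thus ?thesis unfolding Gq_def using mZ[of x] by measurable
  qed
  have mHq: "Hq x h k \<in> borel_measurable \<Omega>" for x h k
  proof -
    have "(\<lambda>\<omega>\<eta>. \<integral>u. F \<omega>\<eta> u * exp (x \<bullet> \<phi> u) * ((h \<bullet> \<phi> u) * (k \<bullet> \<phi> u)) \<partial>\<mu> \<omega>\<eta>) \<in> borel_measurable \<Omega>"
      by (rule measK) (use Fj in \<open>unfold \<phi>_def, measurable\<close>)
    thus ?thesis using mGq[of x h] mGq[of x k] mZ[of x] unfolding Hq_def by measurable
  qed
  note pt = ptsetup.A[OF pts] ptsetup.B[OF pts] ptsetup.bG[OF pts] ptsetup.bH[OF pts] ptsetup.Lip[OF pts]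
    ptsetup.Gp_add[OF pts] ptsetup.Gp_scale[OF pts] ptsetup.Hp_add[OF pts] ptsetup.Hp_scale[OF pts] ptsetup.Hp_sym[OF pts]
  have pA: "\<bar>Lq (x + h) \<omega>\<eta> - Lq x \<omega>\<eta> - Gq x h \<omega>\<eta>\<bar> \<le> 5 * (norm h)\<^sup>2"
    if "\<omega>\<eta> \<in> space \<Omega>" "norm h \<le> 1/4" for x h \<omega>\<eta>
    using pt(1)[OF that] by (simp add: eqL eqG that(1))
  have pB: "\<bar>Gq (x + h) k \<omega>\<eta> - Gq x k \<omega>\<eta> - Hq x h k \<omega>\<eta>\<bar> \<le> 10 * (norm h)\<^sup>2 * norm k"
    if "\<omega>\<eta> \<in> space \<Omega>" "norm h \<le> 1/4" for x h k \<omega>\<eta>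
    using pt(2)[OF that] by (simp add: eqH eqG that(1))
  have pbG: "\<bar>Gq x h \<omega>\<eta>\<bar> \<le> norm h" if "\<omega>\<eta> \<in> space \<Omega>" for x h \<omega>\<eta>
    using pt(3)[OF that] by (simp add: eqG that)
  have pbH: "\<bar>Hq x h k \<omega>\<eta>\<bar> \<le> 2 * norm h * norm k" if "\<omega>\<eta> \<in> space \<Omega>" for x h k \<omega>\<eta>
    using pt(4)[OF that] by (simp add: eqH that)
  have pLip: "\<bar>Lq x' \<omega>\<eta> - Lq x \<omega>\<eta>\<bar> \<le> norm (x' - x)" if "\<omega>\<eta> \<in> space \<Omega>" for x x' \<omega>\<eta>
    using pt(5)[OF that] by (simp add: eqL that)
  have pGadd: "Gq x (h + h') \<omega>\<eta> = Gq x h \<omega>\<eta> + Gq x h' \<omega>\<eta>" if "\<omega>\<eta> \<in> space \<Omega>" for x h h' \<omega>\<eta>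
    using pt(6)[OF that] by (simp add: eqG that)
  have pGscale: "Gq x (c *\<^sub>R h) \<omega>\<eta> = c * Gq x h \<omega>\<eta>" if "\<omega>\<eta> \<in> space \<Omega>" for x c h \<omega>\<eta>
    using pt(7)[OF that] by (simp add: eqG that)
  have pHadd: "Hq x (h + h') k \<omega>\<eta> = Hq x h k \<omega>\<eta> + Hq x h' k \<omega>\<eta>" if "\<omega>\<eta> \<in> space \<Omega>" for x h h' k \<omega>\<eta>
    using pt(8)[OF that] by (simp add: eqH that)
  have pHscale: "Hq x (c *\<^sub>R h) k \<omega>\<eta> = c * Hq x h k \<omega>\<eta>" if "\<omega>\<eta> \<in> space \<Omega>" for x c h k \<omega>\<eta>
    using pt(9)[OF that] by (simp add: eqH that)
  have pHsym: "Hq x h k \<omega>\<eta> = Hq x k h \<omega>\<eta>" if "\<omega>\<eta> \<in> space \<Omega>" for x h k \<omega>\<eta>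
    using pt(10)[OF that] by (simp add: eqH that)
  interpret O: prob_space \<Omega> by (rule ps\<Omega>)
  have intL: "integrable \<Omega> (Lq b)" if "integrable \<Omega> (Lq a)" for a b
  proof (rule Bochner_Integration.integrable_bound[where f="\<lambda>\<omega>\<eta>. \<bar>Lq a \<omega>\<eta>\<bar> + norm (b - a)"])
    show "integrable \<Omega> (\<lambda>\<omega>\<eta>. \<bar>Lq a \<omega>\<eta>\<bar> + norm (b - a))"
      using that by (intro Bochner_Integration.integrable_add integrable_abs) auto
    show "Lq b \<in> borel_measurable \<Omega>" by (rule mLq)
    show "AE \<omega>\<eta> in \<Omega>. norm (Lq b \<omega>\<eta>) \<le> norm (\<bar>Lq a \<omega>\<eta>\<bar> + norm (b - a))"
    proof (rule AE_I2)
      fix \<omega>\<eta> assume "\<omega>\<eta> \<in> space \<Omega>"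
      from pLip[OF this] have "\<bar>Lq b \<omega>\<eta> - Lq a \<omega>\<eta>\<bar> \<le> norm (b - a)" by blast
      thus "norm (Lq b \<omega>\<eta>) \<le> norm (\<bar>Lq a \<omega>\<eta>\<bar> + norm (b - a))" by simp
    qed
  qed
  define p where "p = Pfun M N R (w \<pi>) P1 \<xi> g \<pi>"
  have main: "twice_differentiable_on p {x. symm x} \<and>
    (\<forall>x y. norm y \<le> 1 \<longrightarrow>
       \<bar>deriv (\<lambda>r. p (x + r *\<^sub>R y)) 0\<bar> + \<bar>deriv (\<lambda>r. deriv (\<lambda>s. p (x + s *\<^sub>R y)) r) 0\<bar> \<le> 3)"
  proof (cases "integrable \<Omega> (Lq 0)")
    case True
    have iL: "integrable \<Omega> (Lq x)" for x by (rule intL[OF True])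
    have iG: "integrable \<Omega> (Gq x h)" for x h by (rule prob_abs_bound(1)[OF ps\<Omega> mGq pbG])
    have iH: "integrable \<Omega> (Hq x h k)" for x h k by (rule prob_abs_bound(1)[OF ps\<Omega> mHq pbH])
    define G where "G x h = (\<integral>\<omega>\<eta>. Gq x h \<omega>\<eta> \<partial>\<Omega>)" for x h
    define H where "H x h k = (\<integral>\<omega>\<eta>. Hq x h k \<omega>\<eta> \<partial>\<Omega>)" for x h k
    have Hsym: "H x h k = H x k h" for x h k unfolding H_def by (rule Bochner_Integration.integral_cong[OF refl pHsym])
    have linH1: "linear (\<lambda>h. H x h k)" for x k
    proof (rule linearI)
      fix h h' show "H x (h + h') k = H x h k + H x h' k"
        unfolding H_def by (simp add: Bochner_Integration.integral_cong[OF refl pHadd] iH)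
      fix c h show "H x (c *\<^sub>R h) k = c *\<^sub>R H x h k"
        unfolding H_def by (simp add: Bochner_Integration.integral_cong[OF refl pHscale])
    qed
    show ?thesis
    proof (rule abs_main[of G H])
      show "linear (G x)" for x
      proof (rule linearI)
        fix h h' show "G x (h + h') = G x h + G x h'"
          unfolding G_def by (simp add: Bochner_Integration.integral_cong[OF refl pGadd] iG)
        fix c h show "G x (c *\<^sub>R h) = c *\<^sub>R G x h"
          unfolding G_def by (simp add: Bochner_Integration.integral_cong[OF refl pGscale])
      qed
      show "linear (\<lambda>h. H x h k)" for x k by (rule linH1)
      show "linear (H x h)" for x h
      proof -
        have "H x h = (\<lambda>k. H x k h)" by (rule ext) (rule Hsym)
        thus ?thesis using linH1[of x h] by simp
      qed
      show "\<bar>G x h\<bar> \<le> norm h" for x h unfolding G_def by (rule prob_abs_bound(2)[OF ps\<Omega> mGq pbG])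
      show "\<bar>H x h k\<bar> \<le> 2 * norm h * norm k" for x h k unfolding H_def by (rule prob_abs_bound(2)[OF ps\<Omega> mHq pbH])
      show "\<bar>p (x + h) - p x - G x h\<bar> \<le> 5 * (norm h)\<^sup>2" if "norm h \<le> 1/4" for x h
      proof -
        have "p (x + h) - p x - G x h = (\<integral>\<omega>\<eta>. Lq (x + h) \<omega>\<eta> - Lq x \<omega>\<eta> - Gq x h \<omega>\<eta> \<partial>\<Omega>)"
          unfolding p_def Peq G_def using iL iG by simp
        also have "\<bar>\<dots>\<bar> \<le> 5 * (norm h)\<^sup>2"
          by (rule prob_abs_bound(2)[OF ps\<Omega> _ pA[OF _ that]]) (use mLq mGq in measurable)
        finally show ?thesis .
      qed
      show "\<bar>G (x + h) k - G x k - H x h k\<bar> \<le> 10 * (norm h)\<^sup>2 * norm k" if "norm h \<le> 1/4" for x h k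
      proof -
        have "G (x + h) k - G x k - H x h k = (\<integral>\<omega>\<eta>. Gq (x + h) k \<omega>\<eta> - Gq x k \<omega>\<eta> - Hq x h k \<omega>\<eta> \<partial>\<Omega>)"
          unfolding G_def H_def using iG iH by simp
        also have "\<bar>\<dots>\<bar> \<le> 10 * (norm h)\<^sup>2 * norm k"
          by (rule prob_abs_bound(2)[OF ps\<Omega> _ pB[OF _ that]]) (use mGq mHq in measurable)
        finally show ?thesis .
      qed
    qed
  next
    case False
    have "\<not> integrable \<Omega> (Lq x)" for x using intL False by blast
    hence pc: "p x = Kc" for x unfolding p_def Peq by (simp add: not_integrable_integral_eq)
    show ?thesis
    proof (rule abs_main[of "\<lambda>x h. 0" "\<lambda>x h k. 0"])
      show "\<bar>p (x + h) - p x - 0\<bar> \<le> 5 * (norm h)\<^sup>2" for x h by (simp add: pc)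
    qed (auto intro: linearI)
  qed
  show "twice_differentiable_on (Pfun M N R (w \<pi>) P1 \<xi> g \<pi>) {x. symm x} \<and>
           (\<forall>x y. symm x \<longrightarrow> symm y \<longrightarrow> norm y \<le> 1 \<longrightarrow>
              \<bar>deriv (\<lambda>r. Pfun M N R (w \<pi>) P1 \<xi> g \<pi> (x + r *\<^sub>R y)) 0\<bar>
              + \<bar>deriv (\<lambda>r. deriv (\<lambda>s. Pfun M N R (w \<pi>) P1 \<xi> g \<pi> (x + s *\<^sub>R y)) r) 0\<bar> \<le> 3)"
    using main unfolding p_def by blast
qed

end
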